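(* Let $G$ be a finite group of order $n\ge 3$, $k$ a positive integer, $a_1,\dots,a_k,b_1,\dots,b_k$ independent uniformly random elements of $G$, and for $(i,j)\in V=[k]\times[k]$ and $x\in G$ let $I_{(i,j)}(x)$ be the indicator of $\{x=a_ib_j \text{ or } x=b_ja_i\}$. Let $\Gamma=(V,E)$ be the graph with $(i,j)\sim(\ell,m)$ iff ($i=\ell$ and $j\ne m$) or ($i\ne \ell$ and $j=m$). For $x\ne y\in G$ let $\Gamma_{x,y}$ be the graph on $V\times\{x,y\}$ with $(v,z)\sim(u,z')$ iff $\{v,u\}\in E$, and $J(v,z)=I_v(z)$. Let $x\ne y\in G$. (1) Both $\Delta(\Gamma,\{I_v(x)\}_{v\in V})$ and $\Delta^*(\Gamma,\{I_v(x)\}_{v\in V})$ are at most $4\cdot\frac{k^3}{n^2}\exp\big(\frac{6k}{n-2}\big)$. (2) Both $\Delta(\Gamma_{x,y},\{J(v,z)\}_{(v,z)\in V\times\{x,y\}})$ and $\Delta^*(\Gamma_{x,y},\{J(v,z)\}_{(v,z)\in V\times\{x,y\}})$ are at most $16\cdot\frac{k^3}{n^2}\exp\big(\frac{12k}{n-2}\big)$.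
   Context: $[k]=\{1,\dots,k\}$. For a vertex $w$ and a set $S$ of vertices, $w\sim S$ means there is an edge between $w$ and some element of $S$ (so this may include elements of $S$ themselves). For a family of Bernoulli random variables $\{X_i\}_{i\in W}$ and a graph $\Gamma$ on $W$, define $$\Delta(\Gamma,\{X_i\})=\frac12\sum_{i\in W}\sum_{j\sim i}\mathbb{E}[X_iX_j]\prod_{l\sim\{i,j\}}(1-\mathbb{E}[X_l])^{-1},$$ $$\Delta^*(\Gamma,\{X_i\})=\frac12\sum_{i\in W}\sum_{j\sim i}\mathbb{E}[X_i]\mathbb{E}[X_j]\prod_{l\sim\{i,j\}}(1-\mathbb{E}[X_l])^{-1}.$$ *)

theory Defs
  imports "HOL-Probability.Probability" "HOL-Algebra.Group"
begin

definition Delta :: "'s pmf \<Rightarrow> 'v set \<Rightarrow> ('v \<Rightarrow> 'v \<Rightarrow> bool) \<Rightarrow> ('v \<Rightarrow> 's \<Rightarrow> real) \<Rightarrow> real" where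
  "Delta M W adj X = (1/2) * (\<Sum>i\<in>W. \<Sum>j\<in>{j\<in>W. adj i j}.
      measure_pmf.expectation M (\<lambda>\<omega>. X i \<omega> * X j \<omega>) *
      (\<Prod>l\<in>{l\<in>W. adj l i \<or> adj l j}. 1 / (1 - measure_pmf.expectation M (X l))))"

definition Delta_star :: "'s pmf \<Rightarrow> 'v set \<Rightarrow> ('v \<Rightarrow> 'v \<Rightarrow> bool) \<Rightarrow> ('v \<Rightarrow> 's \<Rightarrow> real) \<Rightarrow> real" where
  "Delta_star M W adj X = (1/2) * (\<Sum>i\<in>W. \<Sum>j\<in>{j\<in>W. adj i j}.
      measure_pmf.expectation M (X i) * measure_pmf.expectation M (X j) *
      (\<Prod>l\<in>{l\<in>W. adj l i \<or> adj l j}. 1 / (1 - measure_pmf.expectation M (X l))))"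

definition sample :: "('a, 'b) monoid_scheme \<Rightarrow> nat \<Rightarrow> ((nat \<Rightarrow> 'a) \<times> (nat \<Rightarrow> 'a)) pmf" where
  "sample G k = pmf_of_set (({1..k} \<rightarrow>\<^sub>E carrier G) \<times> ({1..k} \<rightarrow>\<^sub>E carrier G))"

definition Vk :: "nat \<Rightarrow> (nat \<times> nat) set" where
  "Vk k = {1..k} \<times> {1..k}"

definition Ind :: "('a, 'b) monoid_scheme \<Rightarrow> 'a \<Rightarrow> nat \<times> nat \<Rightarrow> (nat \<Rightarrow> 'a) \<times> (nat \<Rightarrow> 'a) \<Rightarrow> real" where
  "Ind G x v \<omega> = (case v of (i, j) \<Rightarrow> case \<omega> of (a, b) \<Rightarrow>
      of_bool (x = a i \<otimes>\<^bsub>G\<^esub> b j \<or> x = b j \<otimes>\<^bsub>G\<^esub> a i))"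

definition gam :: "nat \<times> nat \<Rightarrow> nat \<times> nat \<Rightarrow> bool" where
  "gam v u = (case v of (i, j) \<Rightarrow> case u of (l, m) \<Rightarrow>
      (i = l \<and> j \<noteq> m) \<or> (i \<noteq> l \<and> j = m))"

definition gam2 :: "(nat \<times> nat) \<times> 'a \<Rightarrow> (nat \<times> nat) \<times> 'a \<Rightarrow> bool" where
  "gam2 p q = gam (fst p) (fst q)"

definition Jv :: "('a, 'b) monoid_scheme \<Rightarrow> (nat \<times> nat) \<times> 'a \<Rightarrow> (nat \<Rightarrow> 'a) \<times> (nat \<Rightarrow> 'a) \<Rightarrow> real" where
  "Jv G p = Ind G (snd p) (fst p)"

end

theory Submission
  imports Defs
begin

lemma sum_PiE_1:
  fixes h :: "'b \<Rightarrow> real"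
  assumes "finite I" "i \<in> I"
  shows "(\<Sum>f\<in>PiE I (\<lambda>_. A). h (f i)) = real (card A) ^ (card I - 1) * (\<Sum>y\<in>A. h y)"
proof -
  define J where "J = I - {i}"
  have IJ: "I = insert i J" "i \<notin> J" "finite J" using assms by (auto simp: J_def)
  have "(\<Sum>f\<in>PiE I (\<lambda>_. A). h (f i)) = (\<Sum>p\<in>A \<times> PiE J (\<lambda>_. A). h (((\<lambda>(y, g). g(i := y)) p) i))"
    unfolding IJ(1) PiE_insert_eq
    by (subst sum.reindex) (use inj_combinator[OF IJ(2)] in auto)
  also have "\<dots> = (\<Sum>p\<in>A \<times> PiE J (\<lambda>_. A). h (fst p))"
    by (intro sum.cong) auto
  also have "\<dots> = (\<Sum>(y,g)\<in>A \<times> PiE J (\<lambda>_. A). h y)"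
    by (simp add: split_beta)
  also have "\<dots> = (\<Sum>y\<in>A. \<Sum>g\<in>PiE J (\<lambda>_. A). h y)"
    by (rule sum.cartesian_product[symmetric])
  also have "\<dots> = (\<Sum>y\<in>A. real (card A) ^ (card J) * h y)"
    using IJ(3) by (simp add: card_PiE)
  also have "card J = card I - 1" using assms by (simp add: J_def)
  finally show ?thesis by (simp add: sum_distrib_left)
qed

lemma sum_PiE_2:
  fixes h :: "'b \<Rightarrow> 'b \<Rightarrow> real"
  assumes "finite I" "i \<in> I" "i' \<in> I" "i \<noteq> i'"
  shows "(\<Sum>f\<in>PiE I (\<lambda>_. A). h (f i) (f i')) = real (card A) ^ (card I - 2) * (\<Sum>y\<in>A. \<Sum>z\<in>A. h y z)"
proof -
  define J where "J = I - {i}"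
  have IJ: "I = insert i J" "i \<notin> J" "finite J" "i' \<in> J" using assms by (auto simp: J_def)
  have "(\<Sum>f\<in>PiE I (\<lambda>_. A). h (f i) (f i')) = (\<Sum>p\<in>A \<times> PiE J (\<lambda>_. A). (\<lambda>f. h (f i) (f i')) ((\<lambda>(y, g). g(i := y)) p))"
    unfolding IJ(1) PiE_insert_eq
    by (subst sum.reindex) (use inj_combinator[OF IJ(2)] in auto)
  also have "\<dots> = (\<Sum>p\<in>A \<times> PiE J (\<lambda>_. A). h (fst p) (snd p i'))"
    using assms(4) by (intro sum.cong refl) (auto simp: split_beta)
  also have "\<dots> = (\<Sum>y\<in>A. \<Sum>g\<in>PiE J (\<lambda>_. A). h y (g i'))"
    by (simp add: sum.cartesian_product split_beta)
  also have "\<dots> = (\<Sum>y\<in>A. real (card A) ^ (card J - 1) * (\<Sum>z\<in>A. h y z))"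
    using IJ by (intro sum.cong refl sum_PiE_1) auto
  also have "card J - 1 = card I - 2" using assms by (simp add: J_def)
  finally show ?thesis by (simp add: sum_distrib_left)
qed

lemma exp_sample:
  fixes F :: "(nat \<Rightarrow> 'a) \<times> (nat \<Rightarrow> 'a) \<Rightarrow> real"
  assumes "finite (carrier G)" "carrier G \<noteq> {}"
  shows "measure_pmf.expectation (sample G k) F =
    (\<Sum>a\<in>{1..k} \<rightarrow>\<^sub>E carrier G. \<Sum>b\<in>{1..k} \<rightarrow>\<^sub>E carrier G. F (a, b)) / (real (card (carrier G)) ^ k * real (card (carrier G)) ^ k)"
proof -
  let ?P = "{1..k} \<rightarrow>\<^sub>E carrier G"
  have fin: "finite ?P" using assms by (simp add: finite_PiE)
  have ne: "?P \<noteq> {}" using assms by (simp add: PiE_eq_empty_iff)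
  have cP: "card ?P = card (carrier G) ^ k" by (simp add: card_PiE)
  have "measure_pmf.expectation (pmf_of_set (?P \<times> ?P)) F = sum F (?P \<times> ?P) / card (?P \<times> ?P)"
    by (rule integral_pmf_of_set) (use fin ne in auto)
  also have "card (?P \<times> ?P) = card (carrier G) ^ k * card (carrier G) ^ k"
    by (simp only: card_cartesian_product cP)
  also have "sum F (?P \<times> ?P) = (\<Sum>a\<in>?P. \<Sum>b\<in>?P. F (a, b))"
    by (simp add: sum.cartesian_product)
  finally show ?thesis unfolding sample_def by simp
qed

lemma E_single:
  fixes F :: "'a \<Rightarrow> 'a \<Rightarrow> real"
  assumes "finite (carrier G)" "carrier G \<noteq> {}" "i \<in> {1..k}" "j \<in> {1..k}"
  shows "measure_pmf.expectation (sample G k) (\<lambda>(a,b). F (a i) (b j)) =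
     (\<Sum>x\<in>carrier G. \<Sum>y\<in>carrier G. F x y) / real (card (carrier G)) ^ 2"
proof -
  let ?n = "real (card (carrier G))"
  have n0: "?n > 0" using assms by (simp add: card_gt_0_iff)
  have k: "k \<ge> 1" using assms by auto
  have "(\<Sum>a\<in>{1..k} \<rightarrow>\<^sub>E carrier G. \<Sum>b\<in>{1..k} \<rightarrow>\<^sub>E carrier G. F (a i) (b j))
      = (\<Sum>a\<in>{1..k} \<rightarrow>\<^sub>E carrier G. ?n ^ (k - 1) * (\<lambda>x. \<Sum>y\<in>carrier G. F x y) (a i))"
    using assms by (intro sum.cong refl) (subst sum_PiE_1, auto)
  also have "\<dots> = ?n ^ (k - 1) * (\<Sum>a\<in>{1..k} \<rightarrow>\<^sub>E carrier G. (\<lambda>x. \<Sum>y\<in>carrier G. F x y) (a i))"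
    by (simp add: sum_distrib_left)
  also have "\<dots> = ?n ^ (k - 1) * (?n ^ (k - 1) * (\<Sum>x\<in>carrier G. \<Sum>y\<in>carrier G. F x y))"
    using assms by (subst sum_PiE_1) auto
  finally have eq: "(\<Sum>a\<in>{1..k} \<rightarrow>\<^sub>E carrier G. \<Sum>b\<in>{1..k} \<rightarrow>\<^sub>E carrier G. F (a i) (b j)) = 
     ?n ^ (k - 1) * (?n ^ (k - 1) * (\<Sum>x\<in>carrier G. \<Sum>y\<in>carrier G. F x y))" .
  have nk: "?n ^ k = ?n ^ (k - 1) * ?n" using k by (metis Suc_diff_le diff_Suc_1 power_Suc2)
  show ?thesis
    using assms n0 by (subst exp_sample) (simp_all only: case_prod_conv eq nk, simp_all add: power2_eq_square field_simps)
qed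

lemma E_row:
  fixes F :: "'a \<Rightarrow> 'a \<Rightarrow> 'a \<Rightarrow> real"
  assumes "finite (carrier G)" "carrier G \<noteq> {}" "i \<in> {1..k}" "j \<in> {1..k}" "j' \<in> {1..k}" "j \<noteq> j'"
  shows "measure_pmf.expectation (sample G k) (\<lambda>(a,b). F (a i) (b j) (b j')) =
     (\<Sum>x\<in>carrier G. \<Sum>y\<in>carrier G. \<Sum>z\<in>carrier G. F x y z) / real (card (carrier G)) ^ 3"
proof -
  let ?n = "real (card (carrier G))"
  have n0: "?n > 0" using assms by (simp add: card_gt_0_iff)
  have k: "k \<ge> 2" using assms by auto
  have "(\<Sum>a\<in>{1..k} \<rightarrow>\<^sub>E carrier G. \<Sum>b\<in>{1..k} \<rightarrow>\<^sub>E carrier G. F (a i) (b j) (b j'))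
      = (\<Sum>a\<in>{1..k} \<rightarrow>\<^sub>E carrier G. ?n ^ (k - 2) * (\<lambda>x. \<Sum>y\<in>carrier G. \<Sum>z\<in>carrier G. F x y z) (a i))"
    using assms by (intro sum.cong refl) (subst sum_PiE_2, auto)
  also have "\<dots> = ?n ^ (k - 2) * (\<Sum>a\<in>{1..k} \<rightarrow>\<^sub>E carrier G. (\<lambda>x. \<Sum>y\<in>carrier G. \<Sum>z\<in>carrier G. F x y z) (a i))"
    by (simp add: sum_distrib_left)
  also have "\<dots> = ?n ^ (k - 2) * (?n ^ (k - 1) * (\<Sum>x\<in>carrier G. \<Sum>y\<in>carrier G. \<Sum>z\<in>carrier G. F x y z))"
    using assms by (subst sum_PiE_1) auto
  finally have eq: "(\<Sum>a\<in>{1..k} \<rightarrow>\<^sub>E carrier G. \<Sum>b\<in>{1..k} \<rightarrow>\<^sub>E carrier G. F (a i) (b j) (b j')) = 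
     ?n ^ (k - 2) * (?n ^ (k - 1) * (\<Sum>x\<in>carrier G. \<Sum>y\<in>carrier G. \<Sum>z\<in>carrier G. F x y z))" .
  obtain m where km: "k = m + 2" using k by (metis add.commute le_add_diff_inverse)
  show ?thesis
    using assms n0 by (subst exp_sample) (simp_all only: case_prod_conv eq, simp_all add: km power_add power2_eq_square power3_eq_cube field_simps)
qed

lemma E_col:
  fixes F :: "'a \<Rightarrow> 'a \<Rightarrow> 'a \<Rightarrow> real"
  assumes "finite (carrier G)" "carrier G \<noteq> {}" "i \<in> {1..k}" "i' \<in> {1..k}" "j \<in> {1..k}" "i \<noteq> i'"
  shows "measure_pmf.expectation (sample G k) (\<lambda>(a,b). F (a i) (a i') (b j)) =
     (\<Sum>x\<in>carrier G. \<Sum>y\<in>carrier G. \<Sum>z\<in>carrier G. F x y z) / real (card (carrier G)) ^ 3"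
proof -
  let ?n = "real (card (carrier G))"
  have n0: "?n > 0" using assms by (simp add: card_gt_0_iff)
  have k: "k \<ge> 2" using assms by auto
  have "(\<Sum>a\<in>{1..k} \<rightarrow>\<^sub>E carrier G. \<Sum>b\<in>{1..k} \<rightarrow>\<^sub>E carrier G. F (a i) (a i') (b j))
      = (\<Sum>a\<in>{1..k} \<rightarrow>\<^sub>E carrier G. ?n ^ (k - 1) * (\<lambda>x y. \<Sum>z\<in>carrier G. F x y z) (a i) (a i'))"
    using assms by (intro sum.cong refl) (subst sum_PiE_1, auto)
  also have "\<dots> = ?n ^ (k - 1) * (\<Sum>a\<in>{1..k} \<rightarrow>\<^sub>E carrier G. (\<lambda>x y. \<Sum>z\<in>carrier G. F x y z) (a i) (a i'))"
    by (simp add: sum_distrib_left)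
  also have "\<dots> = ?n ^ (k - 1) * (?n ^ (k - 2) * (\<Sum>x\<in>carrier G. \<Sum>y\<in>carrier G. \<Sum>z\<in>carrier G. F x y z))"
    using assms by (subst sum_PiE_2) auto
  finally have eq: "(\<Sum>a\<in>{1..k} \<rightarrow>\<^sub>E carrier G. \<Sum>b\<in>{1..k} \<rightarrow>\<^sub>E carrier G. F (a i) (a i') (b j)) = 
     ?n ^ (k - 1) * (?n ^ (k - 2) * (\<Sum>x\<in>carrier G. \<Sum>y\<in>carrier G. \<Sum>z\<in>carrier G. F x y z))" .
  obtain m where km: "k = m + 2" using k by (metis add.commute le_add_diff_inverse)
  show ?thesis
    using assms n0 by (subst exp_sample) (simp_all only: case_prod_conv eq, simp_all add: km power_add power2_eq_square power3_eq_cube field_simps)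
qed

definition qq :: "('a, 'b) monoid_scheme \<Rightarrow> 'a \<Rightarrow> 'a \<Rightarrow> 'a \<Rightarrow> bool" where
  "qq G t a y = (t = a \<otimes>\<^bsub>G\<^esub> y \<or> t = y \<otimes>\<^bsub>G\<^esub> a)"

lemma qq_sym: "qq G t a y = qq G t y a" by (auto simp: qq_def)

lemma cnt1:
  assumes "group G" "finite (carrier G)" "a \<in> carrier G"
  shows "(\<Sum>y\<in>carrier G. of_bool (qq G t a y) :: real) \<le> 2"
proof -
  interpret group G by fact
  have sub: "carrier G \<inter> {y. qq G t a y} \<subseteq> {inv\<^bsub>G\<^esub> a \<otimes>\<^bsub>G\<^esub> t, t \<otimes>\<^bsub>G\<^esub> inv\<^bsub>G\<^esub> a}"
  proof
    fix y assume y: "y \<in> carrier G \<inter> {y. qq G t a y}"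
    then have yc: "y \<in> carrier G" and dj: "t = a \<otimes>\<^bsub>G\<^esub> y \<or> t = y \<otimes>\<^bsub>G\<^esub> a" by (auto simp: qq_def)
    from dj show "y \<in> {inv\<^bsub>G\<^esub> a \<otimes>\<^bsub>G\<^esub> t, t \<otimes>\<^bsub>G\<^esub> inv\<^bsub>G\<^esub> a}"
    proof
      assume "t = a \<otimes>\<^bsub>G\<^esub> y" then show ?thesis using yc assms(3) by (auto simp: inv_solve_left)
    next
      assume "t = y \<otimes>\<^bsub>G\<^esub> a" then show ?thesis using yc assms(3) by (auto simp: inv_solve_right)
    qed
  qed
  have "card (carrier G \<inter> {y. qq G t a y}) \<le> card {inv\<^bsub>G\<^esub> a \<otimes>\<^bsub>G\<^esub> t, t \<otimes>\<^bsub>G\<^esub> inv\<^bsub>G\<^esub> a}"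
    by (rule card_mono[OF _ sub]) simp
  also have "\<dots> \<le> 2" by (simp add: card_insert_if)
  finally show ?thesis using assms(2) by simp
qed

lemma cnt_single:
  assumes "group G" "finite (carrier G)"
  shows "(\<Sum>x\<in>carrier G. \<Sum>y\<in>carrier G. of_bool (qq G t x y) :: real) \<le> 2 * real (card (carrier G))"
proof -
  have "(\<Sum>x\<in>carrier G. \<Sum>y\<in>carrier G. of_bool (qq G t x y) :: real) \<le> (\<Sum>x\<in>carrier G. 2)"
    by (intro sum_mono cnt1 assms)
  then show ?thesis by simp
qed

lemma cnt_row:
  assumes "group G" "finite (carrier G)"
  shows "(\<Sum>x\<in>carrier G. \<Sum>y\<in>carrier G. \<Sum>z\<in>carrier G. of_bool (qq G t x y) * of_bool (qq G t' x z) :: real)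
     \<le> 4 * real (card (carrier G))"
proof -
  have "(\<Sum>x\<in>carrier G. \<Sum>y\<in>carrier G. \<Sum>z\<in>carrier G. of_bool (qq G t x y) * of_bool (qq G t' x z) :: real)
     = (\<Sum>x\<in>carrier G. (\<Sum>y\<in>carrier G. of_bool (qq G t x y)) * (\<Sum>z\<in>carrier G. of_bool (qq G t' x z)))"
    by (simp add: sum_product)
  also have "\<dots> \<le> (\<Sum>x\<in>carrier G. 2 * 2)"
    by (intro sum_mono mult_mono cnt1 assms) (auto intro: sum_nonneg)
  finally show ?thesis by simp
qed

lemma cnt_col:
  assumes "group G" "finite (carrier G)"
  shows "(\<Sum>x\<in>carrier G. \<Sum>y\<in>carrier G. \<Sum>z\<in>carrier G. of_bool (qq G t x z) * of_bool (qq G t' y z) :: real)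
     \<le> 4 * real (card (carrier G))"
proof -
  have "(\<Sum>x\<in>carrier G. \<Sum>y\<in>carrier G. \<Sum>z\<in>carrier G. of_bool (qq G t x z) * of_bool (qq G t' y z) :: real)
     = (\<Sum>z\<in>carrier G. \<Sum>x\<in>carrier G. \<Sum>y\<in>carrier G. of_bool (qq G t x z) * of_bool (qq G t' y z))"
  proof -
    have "(\<Sum>x\<in>carrier G. \<Sum>y\<in>carrier G. \<Sum>z\<in>carrier G. of_bool (qq G t x z) * of_bool (qq G t' y z) :: real)
     = (\<Sum>x\<in>carrier G. \<Sum>z\<in>carrier G. \<Sum>y\<in>carrier G. of_bool (qq G t x z) * of_bool (qq G t' y z))"
      by (rule sum.cong[OF refl], rule sum.swap)
    also have "\<dots> = (\<Sum>z\<in>carrier G. \<Sum>x\<in>carrier G. \<Sum>y\<in>carrier G. of_bool (qq G t x z) * of_bool (qq G t' y z))"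
      by (rule sum.swap)
    finally show ?thesis .
  qed
  also have "\<dots> = (\<Sum>z\<in>carrier G. (\<Sum>x\<in>carrier G. of_bool (qq G t z x)) * (\<Sum>y\<in>carrier G. of_bool (qq G t' z y)))"
    by (simp add: sum_product qq_sym)
  also have "\<dots> \<le> (\<Sum>z\<in>carrier G. 2 * 2)"
    by (intro sum_mono mult_mono cnt1 assms) (auto intro: sum_nonneg)
  finally show ?thesis by simp
qed

lemma Ind_eq: "Ind G t (i, j) = (\<lambda>(a,b). of_bool (qq G t (a i) (b j)))"
  by (auto simp: Ind_def qq_def fun_eq_iff)

lemma E_Ind:
  assumes "group G" "finite (carrier G)" "(i,j) \<in> Vk k"
  shows "0 \<le> measure_pmf.expectation (sample G k) (Ind G t (i,j))"
    "measure_pmf.expectation (sample G k) (Ind G t (i,j)) \<le> 2 / real (card (carrier G))"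
proof -
  interpret group G by fact
  have ne: "carrier G \<noteq> {}" by auto
  have n0: "real (card (carrier G)) > 0" using assms(2) ne by (simp add: card_gt_0_iff)
  show "0 \<le> measure_pmf.expectation (sample G k) (Ind G t (i,j))"
    by (rule Bochner_Integration.integral_nonneg) (auto simp: Ind_def split: prod.splits)
  have "measure_pmf.expectation (sample G k) (Ind G t (i,j)) =
     (\<Sum>x\<in>carrier G. \<Sum>y\<in>carrier G. of_bool (qq G t x y)) / real (card (carrier G)) ^ 2"
    unfolding Ind_eq using assms ne by (intro E_single) (auto simp: Vk_def)
  also have "\<dots> \<le> 2 * real (card (carrier G)) / real (card (carrier G)) ^ 2"
    by (intro divide_right_mono cnt_single assms) simp
  also have "\<dots> = 2 / real (card (carrier G))" using n0 by (simp add: power2_eq_square)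
  finally show "measure_pmf.expectation (sample G k) (Ind G t (i,j)) \<le> 2 / real (card (carrier G))" .
qed

lemma E_pair:
  assumes "group G" "finite (carrier G)" "v \<in> Vk k" "u \<in> Vk k" "gam v u"
  shows "0 \<le> measure_pmf.expectation (sample G k) (\<lambda>\<omega>. Ind G t v \<omega> * Ind G t' u \<omega>)"
    "measure_pmf.expectation (sample G k) (\<lambda>\<omega>. Ind G t v \<omega> * Ind G t' u \<omega>) \<le> 4 / real (card (carrier G)) ^ 2"
proof -
  interpret group G by fact
  have ne: "carrier G \<noteq> {}" by auto
  have n0: "real (card (carrier G)) > 0" using assms(2) ne by (simp add: card_gt_0_iff)
  show "0 \<le> measure_pmf.expectation (sample G k) (\<lambda>\<omega>. Ind G t v \<omega> * Ind G t' u \<omega>)"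
    by (rule Bochner_Integration.integral_nonneg) (auto simp: Ind_def split: prod.splits)
  obtain i j l m where v: "v = (i,j)" and u: "u = (l,m)" by (cases v, cases u) auto
  have "measure_pmf.expectation (sample G k) (\<lambda>\<omega>. Ind G t v \<omega> * Ind G t' u \<omega>) \<le> 4 * real (card (carrier G)) / real (card (carrier G)) ^ 3"
  proof (cases "i = l")
    case True
    then have jm: "j \<noteq> m" using assms(5) by (auto simp: v u gam_def)
    have "(\<lambda>\<omega>. Ind G t v \<omega> * Ind G t' u \<omega>) = (\<lambda>(a,b). (\<lambda>x y z. of_bool (qq G t x y) * of_bool (qq G t' x z) :: real) (a i) (b j) (b m))" (is "_ = ?g")
      by (auto simp: v u True Ind_eq fun_eq_iff)
    then have "measure_pmf.expectation (sample G k) (\<lambda>\<omega>. Ind G t v \<omega> * Ind G t' u \<omega>) = measure_pmf.expectation (sample G k) ?g" by simp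
    also have "measure_pmf.expectation (sample G k) ?g = 
      (\<Sum>x\<in>carrier G. \<Sum>y\<in>carrier G. \<Sum>z\<in>carrier G. of_bool (qq G t x y) * of_bool (qq G t' x z)) / real (card (carrier G)) ^ 3"
      using assms jm ne by (intro E_row) (auto simp: Vk_def v u)
    also have "\<dots> \<le> 4 * real (card (carrier G)) / real (card (carrier G)) ^ 3"
      by (intro divide_right_mono cnt_row assms) simp
    finally show ?thesis .
  next
    case False
    then have jm: "j = m" using assms(5) by (auto simp: v u gam_def)
    have "(\<lambda>\<omega>. Ind G t v \<omega> * Ind G t' u \<omega>) = (\<lambda>(a,b). (\<lambda>x y z. of_bool (qq G t x z) * of_bool (qq G t' y z) :: real) (a i) (a l) (b j))" (is "_ = ?g")
      by (auto simp: v u jm Ind_eq fun_eq_iff)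
    then have "measure_pmf.expectation (sample G k) (\<lambda>\<omega>. Ind G t v \<omega> * Ind G t' u \<omega>) = measure_pmf.expectation (sample G k) ?g" by simp
    also have "measure_pmf.expectation (sample G k) ?g = 
      (\<Sum>x\<in>carrier G. \<Sum>y\<in>carrier G. \<Sum>z\<in>carrier G. of_bool (qq G t x z) * of_bool (qq G t' y z)) / real (card (carrier G)) ^ 3"
      using assms False ne by (intro E_col) (auto simp: Vk_def v u)
    also have "\<dots> \<le> 4 * real (card (carrier G)) / real (card (carrier G)) ^ 3"
      by (intro divide_right_mono cnt_col assms) simp
    finally show ?thesis .
  qed
  also have "\<dots> = 4 / real (card (carrier G)) ^ 2" using n0 by (simp add: power2_eq_square power3_eq_cube)
  finally show "measure_pmf.expectation (sample G k) (\<lambda>\<omega>. Ind G t v \<omega> * Ind G t' u \<omega>) \<le> 4 / real (card (carrier G)) ^ 2" .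
qed

lemma gen_bound:
  fixes e :: "'v \<Rightarrow> 'v \<Rightarrow> real" and pl :: "'v \<Rightarrow> real" and d m :: nat
  assumes fin: "finite W"
   and e: "\<And>i j. i\<in>W \<Longrightarrow> j\<in>W \<Longrightarrow> adj i j \<Longrightarrow> 0 \<le> e i j \<and> e i j \<le> q"
   and pl: "\<And>l. l\<in>W \<Longrightarrow> 0 \<le> pl l \<and> pl l \<le> p" and p0: "0 \<le> p" and p1: "p < 1" and q0: "0 \<le> q"
   and d: "\<And>i. i\<in>W \<Longrightarrow> card {j\<in>W. adj i j} \<le> d"
   and m: "\<And>i j. i\<in>W \<Longrightarrow> j\<in>W \<Longrightarrow> adj i j \<Longrightarrow> card {l\<in>W. adj l i \<or> adj l j} \<le> m"
  shows "(1/2) * (\<Sum>i\<in>W. \<Sum>j\<in>{j\<in>W. adj i j}. e i j * (\<Prod>l\<in>{l\<in>W. adj l i \<or> adj l j}. 1 / (1 - pl l)))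
     \<le> (1/2) * (real (card W) * (real d * (q * (1/(1-p))^m)))"
proof -
  let ?c = "1/(1-p)"
  have c1: "1 \<le> ?c" using p0 p1 by simp
  have prod: "(\<Prod>l\<in>{l\<in>W. adj l i \<or> adj l j}. 1 / (1 - pl l)) \<le> ?c ^ m"
    if "i\<in>W" "j\<in>W" "adj i j" for i j
  proof -
    have "(\<Prod>l\<in>{l\<in>W. adj l i \<or> adj l j}. 1 / (1 - pl l)) \<le> (\<Prod>l\<in>{l\<in>W. adj l i \<or> adj l j}. ?c)"
    proof (rule prod_mono)
      fix l assume "l \<in> {l\<in>W. adj l i \<or> adj l j}"
      then have "0 \<le> pl l" "pl l \<le> p" using pl by auto
      then show "0 \<le> 1 / (1 - pl l) \<and> 1 / (1 - pl l) \<le> ?c"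
        using p1 by (auto intro!: divide_left_mono)
    qed
    also have "\<dots> = ?c ^ card {l\<in>W. adj l i \<or> adj l j}" by simp
    also have "\<dots> \<le> ?c ^ m" by (rule power_increasing[OF m[OF that] c1])
    finally show ?thesis .
  qed
  have prod0: "0 \<le> (\<Prod>l\<in>{l\<in>W. adj l i \<or> adj l j}. 1 / (1 - pl l))" if "i\<in>W" for i j
  proof (rule prod_nonneg)
    fix l assume "l \<in> {l\<in>W. adj l i \<or> adj l j}"
    then have "pl l \<le> p" using pl by auto
    then show "0 \<le> 1 / (1 - pl l)" using p1 by auto
  qed
  have inner: "(\<Sum>j\<in>{j\<in>W. adj i j}. e i j * (\<Prod>l\<in>{l\<in>W. adj l i \<or> adj l j}. 1 / (1 - pl l)))
      \<le> real d * (q * ?c ^ m)" if i: "i \<in> W" for i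
  proof -
    have "(\<Sum>j\<in>{j\<in>W. adj i j}. e i j * (\<Prod>l\<in>{l\<in>W. adj l i \<or> adj l j}. 1 / (1 - pl l)))
       \<le> real (card {j\<in>W. adj i j}) * (q * ?c ^ m)"
    proof (rule sum_bounded_above)
      fix j assume j: "j \<in> {j\<in>W. adj i j}"
      show "e i j * (\<Prod>l\<in>{l\<in>W. adj l i \<or> adj l j}. 1 / (1 - pl l)) \<le> q * ?c ^ m"
        using e[OF i] prod[OF i] prod0[OF i] j q0 by (intro mult_mono) auto
    qed
    also have "\<dots> \<le> real d * (q * ?c ^ m)"
      using d[OF i] q0 c1 p1 by (intro mult_right_mono mult_nonneg_nonneg zero_le_power) auto
    finally show ?thesis .
  qed
  have "(\<Sum>i\<in>W. \<Sum>j\<in>{j\<in>W. adj i j}. e i j * (\<Prod>l\<in>{l\<in>W. adj l i \<or> adj l j}. 1 / (1 - pl l)))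
     \<le> real (card W) * (real d * (q * ?c ^ m))"
    by (rule sum_bounded_above) (rule inner)
  then show ?thesis by simp
qed

lemma Delta_le:
  fixes d m :: nat
  assumes fin: "finite W"
   and e: "\<And>i j. i\<in>W \<Longrightarrow> j\<in>W \<Longrightarrow> adj i j \<Longrightarrow> 0 \<le> measure_pmf.expectation M (\<lambda>\<omega>. X i \<omega> * X j \<omega>) \<and> measure_pmf.expectation M (\<lambda>\<omega>. X i \<omega> * X j \<omega>) \<le> q"
   and pl: "\<And>l. l\<in>W \<Longrightarrow> 0 \<le> measure_pmf.expectation M (X l) \<and> measure_pmf.expectation M (X l) \<le> p"
   and p0: "0 \<le> p" and p1: "p < 1" and q0: "0 \<le> q"
   and d: "\<And>i. i\<in>W \<Longrightarrow> card {j\<in>W. adj i j} \<le> d"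
   and m: "\<And>i j. i\<in>W \<Longrightarrow> j\<in>W \<Longrightarrow> adj i j \<Longrightarrow> card {l\<in>W. adj l i \<or> adj l j} \<le> m"
  shows "Delta M W adj X \<le> (1/2) * (real (card W) * (real d * (q * (1/(1-p))^m)))"
  unfolding Delta_def by (rule gen_bound[OF fin e pl p0 p1 q0 d m])

lemma Delta_star_le:
  fixes d m :: nat
  assumes fin: "finite W"
   and pl: "\<And>l. l\<in>W \<Longrightarrow> 0 \<le> measure_pmf.expectation M (X l) \<and> measure_pmf.expectation M (X l) \<le> p"
   and p0: "0 \<le> p" and p1: "p < 1"
   and d: "\<And>i. i\<in>W \<Longrightarrow> card {j\<in>W. adj i j} \<le> d"
   and m: "\<And>i j. i\<in>W \<Longrightarrow> j\<in>W \<Longrightarrow> adj i j \<Longrightarrow> card {l\<in>W. adj l i \<or> adj l j} \<le> m"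
  shows "Delta_star M W adj X \<le> (1/2) * (real (card W) * (real d * (p^2 * (1/(1-p))^m)))"
  unfolding Delta_star_def
proof (rule gen_bound[OF fin _ pl p0 p1 _ d m])
  fix i j assume "i \<in> W" "j \<in> W"
  then show "0 \<le> measure_pmf.expectation M (X i) * measure_pmf.expectation M (X j) \<and>
          measure_pmf.expectation M (X i) * measure_pmf.expectation M (X j) \<le> p^2"
    using pl[of i] pl[of j] by (auto simp: power2_eq_square intro: mult_mono)
qed (simp_all add: p0)

lemma card_Vk: "card (Vk k) = k * k"
  by (simp add: Vk_def card_cartesian_product)

lemma deg_Vk: "card {u\<in>Vk k. gam v u} \<le> 2 * k"
proof -
  obtain i j where v: "v = (i,j)" by (cases v)
  have "{u\<in>Vk k. gam v u} \<subseteq> ({i} \<times> {1..k}) \<union> ({1..k} \<times> {j})"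
    by (auto simp: Vk_def gam_def v)
  then have "card {u\<in>Vk k. gam v u} \<le> card (({i} \<times> {1..k}) \<union> ({1..k} \<times> {j}))"
    by (intro card_mono) auto
  also have "\<dots> \<le> card ({i} \<times> {1..k}) + card ({1..k} \<times> {j})" by (rule card_Un_le)
  finally show ?thesis by (simp add: card_cartesian_product)
qed

lemma nb_Vk:
  assumes "gam v w"
  shows "card {l\<in>Vk k. gam l v \<or> gam l w} \<le> 3 * k"
proof -
  obtain i j where v: "v = (i,j)" by (cases v)
  obtain i' j' where w: "w = (i',j')" by (cases w)
  have "\<exists>A B C. {l\<in>Vk k. gam l v \<or> gam l w} \<subseteq> A \<union> B \<union> C \<and> finite A \<and> finite B \<and> finite C \<and> card A \<le> k \<and> card B \<le> k \<and> card C \<le> k"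
  proof (cases "i = i'")
    case True
    show ?thesis
      by (rule exI[of _ "{i} \<times> {1..k}"], rule exI[of _ "{1..k} \<times> {j}"], rule exI[of _ "{1..k} \<times> {j'}"])
         (auto simp: Vk_def gam_def v w True card_cartesian_product)
  next
    case False
    then have "j = j'" using assms by (auto simp: v w gam_def)
    then show ?thesis
      by (intro exI[of _ "{i} \<times> {1..k}"] exI[of _ "{i'} \<times> {1..k}"] exI[of _ "{1..k} \<times> {j}"])
         (auto simp: Vk_def gam_def v w card_cartesian_product)
  qed
  then obtain A B C where ABC: "{l\<in>Vk k. gam l v \<or> gam l w} \<subseteq> A \<union> B \<union> C" "finite A" "finite B" "finite C" "card A \<le> k" "card B \<le> k" "card C \<le> k"
    by blast
  have "card {l\<in>Vk k. gam l v \<or> gam l w} \<le> card (A \<union> B \<union> C)"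
    using ABC by (intro card_mono) auto
  also have "\<dots> \<le> card (A \<union> B) + card C" by (rule card_Un_le)
  also have "\<dots> \<le> card A + card B + card C" using card_Un_le[of A B] by simp
  finally show ?thesis using ABC by simp
qed

lemma cpow:
  assumes "real n \<ge> 3"
  shows "(1 / (1 - 2 / real n)) ^ N \<le> exp (2 * real N / (real n - 2))"
proof -
  have e: "1 / (1 - 2 / real n) = 1 + 2 / (real n - 2)" using assms by (simp add: field_simps)
  have "(1 + 2 / (real n - 2)) ^ N \<le> exp (2 / (real n - 2)) ^ N"
    using assms by (intro power_mono exp_ge_add_one_self) auto
  also have "\<dots> = exp (real N * (2 / (real n - 2)))" by (rule exp_of_nat_mult[symmetric])
  finally show ?thesis by (simp add: e mult.commute)
qed

theorem lemma4p8:
  fixes G :: "('a, 'b) monoid_scheme" and k :: nat and x y :: 'a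
  assumes "group G" and "finite (carrier G)" and "card (carrier G) \<ge> 3"
    and "k \<ge> 1" and "x \<in> carrier G" and "y \<in> carrier G" and "x \<noteq> y"
  shows "(Delta (sample G k) (Vk k) gam (\<lambda>v. Ind G x v)
           \<le> 4 * (real k ^ 3 / real (card (carrier G)) ^ 2) * exp (6 * real k / (real (card (carrier G)) - 2)))
     \<and> (Delta_star (sample G k) (Vk k) gam (\<lambda>v. Ind G x v)
           \<le> 4 * (real k ^ 3 / real (card (carrier G)) ^ 2) * exp (6 * real k / (real (card (carrier G)) - 2)))
     \<and> (Delta (sample G k) (Vk k \<times> {x, y}) gam2 (Jv G)
           \<le> 16 * (real k ^ 3 / real (card (carrier G)) ^ 2) * exp (12 * real k / (real (card (carrier G)) - 2)))
     \<and> (Delta_star (sample G k) (Vk k \<times> {x, y}) gam2 (Jv G)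
           \<le> 16 * (real k ^ 3 / real (card (carrier G)) ^ 2) * exp (12 * real k / (real (card (carrier G)) - 2)))"
proof -
  interpret group G by fact
  let ?n = "real (card (carrier G))"
  let ?c = "1 / (1 - 2 / ?n)"
  have n3: "?n \<ge> 3" using assms(3) by simp
  have p0: "0 \<le> 2 / ?n" and p1: "2 / ?n < 1" and q0: "0 \<le> 4 / ?n ^ 2" using n3 by auto
  have pq: "(2 / ?n) ^ 2 = 4 / ?n ^ 2" by (simp add: power_divide)
  have finV: "finite (Vk k)" by (simp add: Vk_def)
  have finW: "finite (Vk k \<times> {x, y})" using finV by simp
  have single: "0 \<le> measure_pmf.expectation (sample G k) (Ind G t l) \<and> measure_pmf.expectation (sample G k) (Ind G t l) \<le> 2 / ?n"
    if "l \<in> Vk k" for l t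
  proof -
    obtain i j where l: "l = (i,j)" by (cases l)
    show ?thesis using E_Ind[OF assms(1,2), of i j k t] that l by auto
  qed
  have pair: "0 \<le> measure_pmf.expectation (sample G k) (\<lambda>\<omega>. Ind G t v \<omega> * Ind G t' u \<omega>) \<and>
     measure_pmf.expectation (sample G k) (\<lambda>\<omega>. Ind G t v \<omega> * Ind G t' u \<omega>) \<le> 4 / ?n ^ 2"
    if "v \<in> Vk k" "u \<in> Vk k" "gam v u" for v u t t'
    using E_pair[OF assms(1,2) that] by auto
  have C1: "?c ^ (3 * k) \<le> exp (6 * real k / (?n - 2))"
    using cpow[OF n3, of "3 * k"] by simp
  have C2: "?c ^ (6 * k) \<le> exp (12 * real k / (?n - 2))"
    using cpow[OF n3, of "6 * k"] by simp
  have c0: "0 \<le> ?c" using p1 by simp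
  have ar1: "(1/2) * (real (card (Vk k)) * (real (2 * k) * (4 / ?n ^ 2 * ?c ^ (3 * k))))
      \<le> 4 * (real k ^ 3 / ?n ^ 2) * exp (6 * real k / (?n - 2))"
  proof -
    have "(1/2) * (real (card (Vk k)) * (real (2 * k) * (4 / ?n ^ 2 * ?c ^ (3 * k)))) = 4 * (real k ^ 3 / ?n ^ 2) * ?c ^ (3 * k)"
      by (simp add: card_Vk power3_eq_cube)
    also have "\<dots> \<le> 4 * (real k ^ 3 / ?n ^ 2) * exp (6 * real k / (?n - 2))"
      by (intro mult_left_mono C1) auto
    finally show ?thesis .
  qed
  have cardW: "card (Vk k \<times> {x, y}) = k * k * 2" using assms(7) by (simp add: card_cartesian_product card_Vk)
  have ar2: "(1/2) * (real (card (Vk k \<times> {x, y})) * (real (4 * k) * (4 / ?n ^ 2 * ?c ^ (6 * k))))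
      \<le> 16 * (real k ^ 3 / ?n ^ 2) * exp (12 * real k / (?n - 2))"
  proof -
    have "(1/2) * (real (card (Vk k \<times> {x, y})) * (real (4 * k) * (4 / ?n ^ 2 * ?c ^ (6 * k)))) = 16 * (real k ^ 3 / ?n ^ 2) * ?c ^ (6 * k)"
      by (simp add: cardW power3_eq_cube)
    also have "\<dots> \<le> 16 * (real k ^ 3 / ?n ^ 2) * exp (12 * real k / (?n - 2))"
      by (intro mult_left_mono C2) auto
    finally show ?thesis .
  qed
  have d1: "card {j\<in>Vk k. gam i j} \<le> 2 * k" for i by (rule deg_Vk)
  have m1: "card {l\<in>Vk k. gam l i \<or> gam l j} \<le> 3 * k" if "gam i j" for i j using nb_Vk[OF that] .
  have d2: "card {j\<in>Vk k \<times> {x, y}. gam2 i j} \<le> 4 * k" for i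
  proof -
    have "{j\<in>Vk k \<times> {x, y}. gam2 i j} = {u\<in>Vk k. gam (fst i) u} \<times> {x, y}" by (auto simp: gam2_def)
    then show ?thesis using deg_Vk[of k "fst i"] assms(7) by (simp add: card_cartesian_product)
  qed
  have m2: "card {l\<in>Vk k \<times> {x, y}. gam2 l i \<or> gam2 l j} \<le> 6 * k" if "gam2 i j" for i j
  proof -
    have "{l\<in>Vk k \<times> {x, y}. gam2 l i \<or> gam2 l j} = {u\<in>Vk k. gam u (fst i) \<or> gam u (fst j)} \<times> {x, y}"
      by (auto simp: gam2_def)
    then show ?thesis using nb_Vk[of "fst i" "fst j" k] that assms(7) by (simp add: card_cartesian_product gam2_def)
  qed
  have D1: "Delta (sample G k) (Vk k) gam (\<lambda>v. Ind G x v) \<le> (1/2) * (real (card (Vk k)) * (real (2 * k) * (4 / ?n ^ 2 * ?c ^ (3 * k))))"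
    by (rule Delta_le[OF finV pair single p0 p1 q0 d1 m1])
  have D2: "Delta_star (sample G k) (Vk k) gam (\<lambda>v. Ind G x v) \<le> (1/2) * (real (card (Vk k)) * (real (2 * k) * (4 / ?n ^ 2 * ?c ^ (3 * k))))"
    using Delta_star_le[OF finV single p0 p1 d1 m1] unfolding pq .
  have single2: "0 \<le> measure_pmf.expectation (sample G k) (Jv G l) \<and> measure_pmf.expectation (sample G k) (Jv G l) \<le> 2 / ?n"
    if "l \<in> Vk k \<times> {x, y}" for l
    using single[of "fst l" "snd l"] that unfolding Jv_def by auto
  have pair2: "0 \<le> measure_pmf.expectation (sample G k) (\<lambda>\<omega>. Jv G i \<omega> * Jv G j \<omega>) \<and>
     measure_pmf.expectation (sample G k) (\<lambda>\<omega>. Jv G i \<omega> * Jv G j \<omega>) \<le> 4 / ?n ^ 2"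
    if "i \<in> Vk k \<times> {x, y}" "j \<in> Vk k \<times> {x, y}" "gam2 i j" for i j
    using pair[of "fst i" "fst j" "snd i" "snd j"] that unfolding Jv_def gam2_def by auto
  have D3: "Delta (sample G k) (Vk k \<times> {x, y}) gam2 (Jv G) \<le> (1/2) * (real (card (Vk k \<times> {x, y})) * (real (4 * k) * (4 / ?n ^ 2 * ?c ^ (6 * k))))"
    by (rule Delta_le[OF finW pair2 single2 p0 p1 q0 d2 m2])
  have D4: "Delta_star (sample G k) (Vk k \<times> {x, y}) gam2 (Jv G) \<le> (1/2) * (real (card (Vk k \<times> {x, y})) * (real (4 * k) * (4 / ?n ^ 2 * ?c ^ (6 * k))))"
    using Delta_star_le[OF finW single2 p0 p1 d2 m2] unfolding pq .
  show ?thesis using D1 D2 D3 D4 ar1 ar2 by linarith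
qed

end
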